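(* Let $f$ be as in the standing setting and suppose $f$ satisfies quadratic functional growth with constant $\kappa_f>0$: $$f(x)-f^*\ge\frac{\kappa_f}{2}\|x-\bar x\|^2\qquad\forall x\in X.$$ Let $\mu_f=\kappa_f/L_f$. Then $f$ satisfies the global error bound $$\|g(x)\|\ge\frac{\kappa_f}{1+\mu_f+\sqrt{1+\mu_f}}\,\|x-\bar x\|\qquad\forall x\in X.$$
   Context: Standing setting: $X\subseteq\mathbb{R}^n$ is a nonempty closed convex set; $f:X\to\mathbb{R}$ is convex and continuously differentiable, with $L_f$-Lipschitz continuous gradient on $X$ ($L_f>0$). Consider $f^*=\min_{x\in X}f(x)$ with optimal set $X^*$ nonempty and closed and $f^*$ finite. $\|\cdot\|$ is the Euclidean norm, $[u]_S$ is the Euclidean projection onto a closed convex set $S$, and $\bar x=[x]_{X^*}$. The gradient mapping is $g(x)=L_f\big(x-x^+\big)$ with $x^+=[x-\frac1{L_f}\nabla f(x)]_X$. *)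

theory Defs
  imports "HOL-Analysis.Analysis"
begin

definition grad_map :: "'a::euclidean_space set \<Rightarrow> ('a \<Rightarrow> 'a) \<Rightarrow> real \<Rightarrow> 'a \<Rightarrow> 'a" where
  "grad_map X gradf L x = L *\<^sub>R (x - closest_point X (x - (1 / L) *\<^sub>R gradf x))"

end

theory Submission
  imports Defs
begin

lemma line_deriv:
  fixes f :: "'a::euclidean_space \<Rightarrow> real"
  assumes "(f has_derivative (\<lambda>h. G \<bullet> h)) (at (x + t *\<^sub>R (y - x)))"
  shows "((\<lambda>s. f (x + s *\<^sub>R (y - x))) has_real_derivative (G \<bullet> (y - x))) (at t)"
proof -
  have l: "((\<lambda>s. x + s *\<^sub>R (y - x)) has_derivative (\<lambda>h. h *\<^sub>R (y - x))) (at t)"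
    by (auto intro!: derivative_eq_intros)
  have "((\<lambda>s. f (x + s *\<^sub>R (y - x))) has_derivative (\<lambda>h. G \<bullet> (h *\<^sub>R (y - x)))) (at t)"
    using has_derivative_compose[OF l assms] by (simp add: o_def)
  moreover have "(\<lambda>h. G \<bullet> (h *\<^sub>R (y - x))) = (*) (G \<bullet> (y - x))"
    by (rule ext) (simp add: mult.commute)
  ultimately show ?thesis by (simp add: has_field_derivative_def)
qed

lemma grad_ineq:
  fixes f :: "'a::euclidean_space \<Rightarrow> real"
  assumes cv: "convex_on X f" and X: "convex X" and x: "x \<in> X" and y: "y \<in> X"
    and d: "(f has_derivative (\<lambda>h. G \<bullet> h)) (at x)"
  shows "f y \<ge> f x + G \<bullet> (y - x)"
proof -
  define \<psi> where "\<psi> = (\<lambda>s. f (x + s *\<^sub>R (y - x)))"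
  have "(\<psi> has_real_derivative (G \<bullet> (y - x))) (at 0)"
    unfolding \<psi>_def by (rule line_deriv) (use d in simp)
  hence "((\<lambda>t. (\<psi> t - \<psi> 0) / (t - 0)) \<longlongrightarrow> G \<bullet> (y - x)) (at 0)"
    using has_field_derivative_iff by blast
  hence T: "((\<lambda>t. (\<psi> t - \<psi> 0) / (t - 0)) \<longlongrightarrow> G \<bullet> (y - x)) (at_right 0)"
    by (rule filterlim_mono) (simp_all add: at_le)
  have "\<forall>\<^sub>F t in at_right 0. (\<psi> t - \<psi> 0) / (t - 0) \<le> f y - f x"
  proof -
    have "\<forall>\<^sub>F t in at_right (0::real). t < 1"
      unfolding eventually_at_right_field by (intro exI[of _ 1]) simp
    moreover have "\<forall>\<^sub>F t in at_right (0::real). t > 0"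
      by (rule eventually_at_right_less)
    ultimately show ?thesis
    proof eventually_elim
      case (elim t)
      have "f ((1 - t) *\<^sub>R x + t *\<^sub>R y) \<le> (1 - t) * f x + t * f y"
        using convex_onD[OF cv, of t x y] elim x y by simp
      moreover have "(1 - t) *\<^sub>R x + t *\<^sub>R y = x + t *\<^sub>R (y - x)"
        by (simp add: algebra_simps)
      ultimately have "\<psi> t - \<psi> 0 \<le> t * (f y - f x)"
        unfolding \<psi>_def by (simp add: algebra_simps)
      thus ?case using elim by (simp add: divide_le_eq mult.commute)
    qed
  qed
  hence "G \<bullet> (y - x) \<le> f y - f x"
    using tendsto_upperbound[OF T] by simp
  thus ?thesis by simp
qed

lemma descent:
  fixes f :: "'a::euclidean_space \<Rightarrow> real"
  assumes X: "convex X" and x: "x \<in> X" and y: "y \<in> X"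
    and d: "\<And>z. z \<in> X \<Longrightarrow> (f has_derivative (\<lambda>h. gradf z \<bullet> h)) (at z)"
    and lip: "\<And>u v. u \<in> X \<Longrightarrow> v \<in> X \<Longrightarrow> norm (gradf u - gradf v) \<le> L * norm (u - v)"
    and L: "L \<ge> 0"
  shows "f y \<le> f x + gradf x \<bullet> (y - x) + L / 2 * (norm (y - x))\<^sup>2"
proof -
  define p where "p = (\<lambda>t::real. x + t *\<^sub>R (y - x))"
  have pX: "p t \<in> X" if "0 \<le> t" "t \<le> 1" for t
  proof -
    have "(1 - t) *\<^sub>R x + t *\<^sub>R y \<in> X"
      using convexD_alt[OF X x y, of t] that by simp
    moreover have "(1 - t) *\<^sub>R x + t *\<^sub>R y = p t"
      by (simp add: p_def algebra_simps)
    ultimately show ?thesis by simp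
  qed
  define \<phi> where "\<phi> = (\<lambda>t. f (p t) - t * (gradf x \<bullet> (y - x)) - L / 2 * t\<^sup>2 * (norm (y - x))\<^sup>2)"
  define \<phi>' where "\<phi>' = (\<lambda>t. gradf (p t) \<bullet> (y - x) - gradf x \<bullet> (y - x) - L * t * (norm (y - x))\<^sup>2)"
  have D: "(\<phi> has_real_derivative \<phi>' t) (at t)" if "0 \<le> t" "t \<le> 1" for t
  proof -
    have "((\<lambda>s. f (p s)) has_real_derivative (gradf (p t) \<bullet> (y - x))) (at t)"
      unfolding p_def by (rule line_deriv) (use d pX[OF that] in \<open>simp add: p_def\<close>)
    then show ?thesis unfolding \<phi>_def \<phi>'_def
      by (auto intro!: derivative_eq_intros)
  qed
  obtain z where z: "0 < z" "z < 1" "\<phi> 1 - \<phi> 0 = (1 - 0) * \<phi>' z"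
    using MVT2[of 0 1 \<phi> \<phi>'] D by auto
  have "(gradf (p z) - gradf x) \<bullet> (y - x) \<le> norm (gradf (p z) - gradf x) * norm (y - x)"
    by (rule norm_cauchy_schwarz)
  also have "\<dots> \<le> L * norm (p z - x) * norm (y - x)"
    by (rule mult_right_mono[OF lip]) (use pX z x in auto)
  also have "norm (p z - x) = z * norm (y - x)" using z by (simp add: p_def)
  finally have "\<phi>' z \<le> 0"
    unfolding \<phi>'_def by (simp add: inner_diff_left power2_eq_square algebra_simps)
  hence "\<phi> 1 \<le> \<phi> 0" using z by simp
  thus ?thesis by (simp add: \<phi>_def p_def)
qed

lemma final_alg:
  fixes L k r d dp :: real
  assumes L: "L > 0" and k: "k > 0" and r: "r \<ge> 0" and d: "d \<ge> 0" and dp: "dp \<ge> 0"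
    and tri: "d \<le> r + dp" and ineq: "k / 2 * dp\<^sup>2 \<le> L * r * d - L * r\<^sup>2 / 2"
  shows "k / (1 + k / L + sqrt (1 + k / L)) * d \<le> L * r"
proof -
  define \<mu> where "\<mu> = k / L"
  define s where "s = sqrt (1 + \<mu>)"
  have mu: "\<mu> > 0" using L k by (simp add: \<mu>_def)
  have s1: "s \<ge> 1" using mu by (simp add: s_def)
  have ss: "s\<^sup>2 = 1 + \<mu>" using mu by (simp add: s_def)
  have den: "1 + k / L + sqrt (1 + k / L) = s * (s + 1)"
    using ss by (simp add: s_def \<mu>_def[symmetric] power2_eq_square algebra_simps)
  have c: "k / (1 + k / L + sqrt (1 + k / L)) = L * ((s - 1) / s)"
  proof -
    have "k = L * \<mu>" using L by (simp add: \<mu>_def)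
    also have "\<mu> = (s - 1) * (s + 1)" using ss by (simp add: power2_eq_square algebra_simps)
    finally have "k = L * ((s - 1) * (s + 1))" .
    moreover have "s * (s + 1) \<noteq> 0" using s1 by simp
    ultimately show ?thesis unfolding den using s1
      by (simp add: field_simps) (metis distrib_right mult.assoc mult.commute)
  qed
  have key: "(s - 1) / s * d \<le> r"
  proof (cases "r \<ge> d")
    case True
    have "(s - 1) / s \<le> 1" using s1 by simp
    hence "(s - 1) / s * d \<le> 1 * d" using d by (intro mult_right_mono) auto
    thus ?thesis using True by simp
  next
    case False
    have dr: "d - r \<le> dp" "d - r > 0" using tri False by auto
    hence "(d - r)\<^sup>2 \<le> dp\<^sup>2" by (intro power_mono) auto
    hence "k / 2 * (d - r)\<^sup>2 \<le> L * r * d - L * r\<^sup>2 / 2"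
    proof -
      have "k / 2 * (d - r)\<^sup>2 \<le> k / 2 * dp\<^sup>2" using \<open>(d - r)\<^sup>2 \<le> dp\<^sup>2\<close> k
        by (intro mult_left_mono) auto
      thus ?thesis using ineq by linarith
    qed
    hence "L * (\<mu> * (d - r)\<^sup>2) \<le> L * (d\<^sup>2 - (d - r)\<^sup>2)"
      using L by (simp add: \<mu>_def power2_eq_square algebra_simps)
    hence "\<mu> * (d - r)\<^sup>2 \<le> d\<^sup>2 - (d - r)\<^sup>2" using L by simp
    moreover have "(s * (d - r))\<^sup>2 = (1 + \<mu>) * (d - r)\<^sup>2" using ss by (simp add: power_mult_distrib)
    ultimately have "(s * (d - r))\<^sup>2 \<le> d\<^sup>2" by (simp add: algebra_simps)
    hence "s * (d - r) \<le> d" using d by (rule power2_le_imp_le)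
    hence "(s - 1) * d \<le> s * r" by (simp add: algebra_simps)
    thus ?thesis using s1 by (simp add: field_simps)
  qed
  have "L * ((s - 1) / s * d) \<le> L * r" using key L by (intro mult_left_mono) auto
  thus ?thesis unfolding c by (simp add: mult.assoc)
qed

theorem theorem7:
  fixes X :: "'a::euclidean_space set" and f :: "'a \<Rightarrow> real" and gradf :: "'a \<Rightarrow> 'a"
    and L \<kappa> fstar :: real
  assumes X_closed: "closed X" and X_convex: "convex X" and X_ne: "X \<noteq> {}"
    and f_convex: "convex_on X f"
    and f_deriv: "\<And>x. x \<in> X \<Longrightarrow> (f has_derivative (\<lambda>h. gradf x \<bullet> h)) (at x)"
    and grad_cont: "continuous_on X gradf"
    and L_pos: "L > 0"
    and grad_lip: "\<And>x y. x \<in> X \<Longrightarrow> y \<in> X \<Longrightarrow> norm (gradf x - gradf y) \<le> L * norm (x - y)"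
    and fstar_def: "fstar = (INF x\<in>X. f x)"
    and bdd: "bdd_below (f ` X)"
    and opt_ne: "{x \<in> X. f x = fstar} \<noteq> {}"
    and kappa_pos: "\<kappa> > 0"
    and qfg: "\<And>x. x \<in> X \<Longrightarrow>
               f x - fstar \<ge> \<kappa> / 2 * (norm (x - closest_point {y \<in> X. f y = fstar} x))\<^sup>2"
  shows "\<forall>x\<in>X. norm (grad_map X gradf L x) \<ge>
           \<kappa> / (1 + \<kappa> / L + sqrt (1 + \<kappa> / L)) * norm (x - closest_point {y \<in> X. f y = fstar} x)"
proof
  fix x assume x: "x \<in> X"
  define S where "S = {y \<in> X. f y = fstar}"
  have fcont: "continuous_on X f"
    using f_deriv has_derivative_continuous continuous_at_imp_continuous_on by blast
  have S_closed: "closed S" unfolding S_def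
    by (rule continuous_closed_preimage_constant[OF fcont X_closed])
  have S_ne: "S \<noteq> {}" using opt_ne by (simp add: S_def)
  have lower: "fstar \<le> f u" if "u \<in> X" for u
    unfolding fstar_def using bdd that by (rule cINF_lower)
  define xb where "xb = closest_point S x"
  have xbS: "xb \<in> S" unfolding xb_def by (rule closest_point_in_set[OF S_closed S_ne])
  hence xbX: "xb \<in> X" and fxb: "f xb = fstar" by (auto simp: S_def)
  define z where "z = x - (1 / L) *\<^sub>R gradf x"
  define xp where "xp = closest_point X z"
  have xpX: "xp \<in> X" unfolding xp_def by (rule closest_point_in_set[OF X_closed X_ne])
  define r where "r = norm (x - xp)"
  define d where "d = norm (x - xb)"
  define xpb where "xpb = closest_point S xp"
  have xpbS: "xpb \<in> S" unfolding xpb_def by (rule closest_point_in_set[OF S_closed S_ne])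
  define dp where "dp = norm (xp - xpb)"
  have gnorm: "norm (grad_map X gradf L x) = L * r"
    using L_pos by (simp add: grad_map_def r_def xp_def z_def)
  have VI: "(z - xp) \<bullet> (xb - xp) \<le> 0"
    unfolding xp_def by (rule closest_point_dot[OF X_convex X_closed xbX])
  have desc: "f xp \<le> f x + gradf x \<bullet> (xp - x) + L / 2 * r\<^sup>2"
    using descent[OF X_convex x xpX f_deriv grad_lip] L_pos by (simp add: r_def norm_minus_commute)
  have gi: "f xb \<ge> f x + gradf x \<bullet> (xb - x)"
    by (rule grad_ineq[OF f_convex X_convex x xbX f_deriv[OF x]])
  have VI2: "L * ((x - xp) \<bullet> (xb - xp)) \<le> gradf x \<bullet> (xb - xp)"
  proof -
    have "(x - xp) \<bullet> (xb - xp) - (1 / L) * (gradf x \<bullet> (xb - xp)) \<le> 0"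
      using VI by (simp add: z_def inner_diff_left)
    hence "L * ((x - xp) \<bullet> (xb - xp)) - L * ((1 / L) * (gradf x \<bullet> (xb - xp))) \<le> 0"
      using L_pos by (metis mult_le_0_iff order_less_imp_le right_diff_distrib)
    thus ?thesis using L_pos by simp
  qed
  have split: "(x - xp) \<bullet> (xb - xp) = (x - xp) \<bullet> (xb - x) + r\<^sup>2"
  proof -
    have "(x - xp) \<bullet> (xb - xp) = (x - xp) \<bullet> ((xb - x) + (x - xp))" by simp
    also have "\<dots> = (x - xp) \<bullet> (xb - x) + (x - xp) \<bullet> (x - xp)"
      by (rule inner_add_right)
    finally have "(x - xp) \<bullet> (xb - xp) = (x - xp) \<bullet> (xb - x) + (x - xp) \<bullet> (x - xp)" .
    thus ?thesis by (simp add: r_def power2_norm_eq_inner)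
  qed
  have cs: "(x - xp) \<bullet> (xb - x) \<ge> - (r * d)"
  proof -
    have "\<bar>(x - xp) \<bullet> (xb - x)\<bar> \<le> r * d"
      using Cauchy_Schwarz_ineq2[of "x - xp" "xb - x"] by (simp add: r_def d_def norm_minus_commute)
    thus ?thesis by linarith
  qed
  have gradsplit: "gradf x \<bullet> (xb - x) - gradf x \<bullet> (xp - x) = gradf x \<bullet> (xb - xp)"
    by (simp add: inner_diff_right)
  have upper: "f xp - fstar \<le> L * r * d - L * r\<^sup>2 / 2"
  proof -
    have "L * ((x - xp) \<bullet> (xb - x)) \<ge> L * (- (r * d))"
      using cs L_pos by (intro mult_left_mono) auto
    moreover have "L * ((x - xp) \<bullet> (xb - xp)) = L * ((x - xp) \<bullet> (xb - x)) + L * r\<^sup>2"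
      using split by (simp add: distrib_left)
    ultimately show ?thesis using desc gi fxb VI2 gradsplit by linarith
  qed
  have lowb: "\<kappa> / 2 * dp\<^sup>2 \<le> L * r * d - L * r\<^sup>2 / 2"
    using qfg[OF xpX] upper by (simp add: dp_def xpb_def S_def)
  have tri: "d \<le> r + dp"
  proof -
    have "d \<le> norm (x - xpb)"
      using closest_point_le[OF S_closed xpbS, of x] by (simp add: d_def xb_def dist_norm)
    also have "\<dots> \<le> norm (x - xp) + norm (xp - xpb)" using norm_triangle_ineq[of "x - xp" "xp - xpb"] by simp
    finally show ?thesis by (simp add: r_def dp_def)
  qed
  have "\<kappa> / (1 + \<kappa> / L + sqrt (1 + \<kappa> / L)) * d \<le> L * r"
    by (rule final_alg[OF L_pos kappa_pos _ _ _ tri lowb]) (auto simp: r_def d_def dp_def)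
  thus "\<kappa> / (1 + \<kappa> / L + sqrt (1 + \<kappa> / L)) * norm (x - closest_point {y \<in> X. f y = fstar} x)
        \<le> norm (grad_map X gradf L x)"
    by (simp add: gnorm d_def xb_def S_def)
qed

end
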